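(* Let $K$ be a field, $c\in K\setminus\{0\}$, $n\ge1$. For any $c$-frieze $f$ of order $n$ over $K$ there exists a $(-c)$-frieze $f'$ of order $n$ over $K$ such that for every integer $k$ with $-1\le k\le n+2$ and every $i\in\mathbb{Z}$: $f'(i,i+k-1)=f(i,i+k-1)$ if $k\equiv0\pmod 4$, or if $k\equiv1\pmod4$ and $i$ is even, or if $k\equiv3\pmod4$ and $i$ is odd; and $f'(i,i+k-1)=-f(i,i+k-1)$ if $k\equiv1\pmod4$ and $i$ is odd, or if $k\equiv2\pmod4$, or if $k\equiv3\pmod4$ and $i$ is even.
   Context: For a nonzero $a\in K$, the $a$-continuant polynomials $P_k^a$ ($k\ge -1$) are defined by $P_{-1}^a=0$, $P_0^a=1$ and, for $k\ge1$, $P_k^a(x_1,\dots,x_k)=x_kP_{k-1}^a(x_1,\dots,x_{k-1})+aP_{k-2}^a(x_1,\dots,x_{k-2})$. A family $(x_i)_{i\in\mathbb{Z}}$ in $K$ is $n$-admissible (for parameter $a$) if $P_{n+2}^a(x_i,\dots,x_{i+n+1})=0$ for all $i$. Let $\mathbb{B}_n=\{(i,j)\in\mathbb{Z}^2:-2\le j-i\le n+1\}$. An $a$-frieze of order $n$ is a function $f:\mathbb{B}_n\to K$ for which there is an $n$-admissible family $(x_i)$ (for parameter $a$) with $f(i,j)=P^a_{j-i+1}(x_i,\dots,x_j)$ for all $(i,j)\in\mathbb{B}_n$. *)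

theory Defs
  imports Main
begin

text \<open>cont a k x i = P^a_k(x_i, ..., x_{i+k-1}) for k >= 0.\<close>
fun cont :: "'a::field \<Rightarrow> nat \<Rightarrow> (int \<Rightarrow> 'a) \<Rightarrow> int \<Rightarrow> 'a" where
  "cont a 0 x i = 1"
| "cont a (Suc 0) x i = x i"
| "cont a (Suc (Suc k)) x i = x (i + int k + 1) * cont a (Suc k) x i + a * cont a k x i"

definition contI :: "'a::field \<Rightarrow> int \<Rightarrow> (int \<Rightarrow> 'a) \<Rightarrow> int \<Rightarrow> 'a" where
  "contI a k x i = (if k < 0 then 0 else cont a (nat k) x i)"

definition admissible :: "'a::field \<Rightarrow> nat \<Rightarrow> (int \<Rightarrow> 'a) \<Rightarrow> bool" where
  "admissible a n x \<longleftrightarrow> (\<forall>i. cont a (n + 2) x i = 0)"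

definition B :: "nat \<Rightarrow> (int \<times> int) set" where
  "B n = {(i, j). -2 \<le> j - i \<and> j - i \<le> int n + 1}"

text \<open>f is an a-frieze of order n: its values on B n are given by an admissible family.
  Values of f outside B n are irrelevant (f is only a function on B n).\<close>
definition is_frieze :: "'a::field \<Rightarrow> nat \<Rightarrow> (int \<Rightarrow> int \<Rightarrow> 'a) \<Rightarrow> bool" where
  "is_frieze a n f \<longleftrightarrow> (\<exists>x. admissible a n x \<and>
      (\<forall>(i, j)\<in>B n. f i j = contI a (j - i + 1) x i))"

end

theory Submission
  imports Defs
begin

fun sg :: "nat \<Rightarrow> int \<Rightarrow> 'a::field" where
  "sg 0 i = 1"
| "sg (Suc k) i = (if even (i + int k) then 1 else -1) * sg k i"

lemma cont_neg:
  fixes c :: "'a::field"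
  shows "cont (-c) k (\<lambda>j. (if even j then 1 else -1) * x j) i = sg k i * cont c k x i"
proof (induction c k x i rule: cont.induct)
  case (1 a x i) then show ?case by simp
next
  case (2 a x i) then show ?case by simp
next
  case (3 a k x i)
  have e: "even (i + int k + 1) = (\<not> even (i + int k))" by simp
  have e2: "even (i + int (Suc k)) = (\<not> even (i + int k))" by simp
  show ?case using 3 e e2
    by (simp add: algebra_simps split: if_splits)
qed

lemma sg_mod4:
  "(sg k i :: 'a::field) = (if k mod 4 = 0 then 1 else if k mod 4 = 1 then (if even i then 1 else -1)
     else if k mod 4 = 2 then -1 else (if even i then -1 else 1))"
proof (induction k)
  case 0 then show ?case by simp
next
  case (Suc k)
  have "k mod 4 = 0 \<or> k mod 4 = 1 \<or> k mod 4 = 2 \<or> k mod 4 = 3" by arith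
  moreover have "even (int k) = even k" by simp
  moreover have "k mod 4 = 1 \<Longrightarrow> odd k" "k mod 4 = 3 \<Longrightarrow> odd k"
    "k mod 4 = 0 \<Longrightarrow> even k" "k mod 4 = 2 \<Longrightarrow> even k" by presburger+
  moreover have "Suc k mod 4 = (if k mod 4 = 3 then 0 else Suc (k mod 4))" by presburger
  ultimately show ?case using Suc by (auto split: if_splits)
qed

theorem mainTheorem2:
  fixes c :: "'a::field" and n :: nat and f :: "int \<Rightarrow> int \<Rightarrow> 'a"
  assumes "c \<noteq> 0" and "n \<ge> 1" and "is_frieze c n f"
  shows "\<exists>f'. is_frieze (- c) n f' \<and>
    (\<forall>k i. -1 \<le> k \<and> k \<le> int n + 2 \<longrightarrow>
       (((k mod 4 = 0 \<or> (k mod 4 = 1 \<and> even i) \<or> (k mod 4 = 3 \<and> odd i))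
          \<longrightarrow> f' i (i + k - 1) = f i (i + k - 1)) \<and>
       (((k mod 4 = 1 \<and> odd i) \<or> k mod 4 = 2 \<or> (k mod 4 = 3 \<and> even i))
          \<longrightarrow> f' i (i + k - 1) = - f i (i + k - 1))))"
proof -
  obtain x where adm: "admissible c n x" and fx: "\<forall>(i, j)\<in>B n. f i j = contI c (j - i + 1) x i"
    using assms(3) unfolding is_frieze_def by blast
  define x' where "x' = (\<lambda>j. (if even j then 1 else -1) * x j)"
  define f' where "f' = (\<lambda>i j. contI (-c) (j - i + 1) x' i)"
  have adm': "admissible (-c) n x'"
    using adm unfolding admissible_def x'_def by (simp only: cont_neg mult_zero_right simp_thms)
  have fr: "is_frieze (- c) n f'"
    unfolding is_frieze_def f'_def using adm' by blast
  have main: "f' i (i + k - 1) = (if k < 0 then 1 else sg (nat k) i) * f i (i + k - 1)"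
    if "-1 \<le> k" "k \<le> int n + 2" for k i
  proof -
    have "(i, i + k - 1) \<in> B n" using that unfolding B_def by auto
    then have "f i (i + k - 1) = contI c k x i" using fx by auto
    then show ?thesis unfolding f'_def contI_def x'_def by (simp add: cont_neg)
  qed
  show ?thesis
  proof (rule exI[of _ f'], rule conjI[OF fr], intro allI impI)
    fix k i :: int
    assume r: "-1 \<le> k \<and> k \<le> int n + 2"
    show "((k mod 4 = 0 \<or> (k mod 4 = 1 \<and> even i) \<or> (k mod 4 = 3 \<and> odd i))
          \<longrightarrow> f' i (i + k - 1) = f i (i + k - 1)) \<and>
          (((k mod 4 = 1 \<and> odd i) \<or> k mod 4 = 2 \<or> (k mod 4 = 3 \<and> even i))
          \<longrightarrow> f' i (i + k - 1) = - f i (i + k - 1))"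
    proof -
      have "(k = -1 \<and> f' i (i + k - 1) = 0 \<and> f i (i + k - 1) = 0) \<or>
         (\<exists>m. k = int m \<and> f' i (i + k - 1) = sg m i * f i (i + k - 1))"
      proof (cases "k < 0")
        case True
        then have k: "k = -1" using r by simp
        have "(i, i + k - 1) \<in> B n" using r unfolding B_def by auto
        then have "f i (i + k - 1) = contI c k x i" using fx by auto
        then show ?thesis using k unfolding f'_def contI_def by simp
      next
        case False
        then show ?thesis using main[of k i] r by (intro disjI2 exI[of _ "nat k"]) auto
      qed
      then have C: "((k mod 4 = 0 \<or> (k mod 4 = 1 \<and> even i) \<or> (k mod 4 = 3 \<and> odd i))
          \<longrightarrow> f' i (i + k - 1) = f i (i + k - 1)) \<and>
          (((k mod 4 = 1 \<and> odd i) \<or> k mod 4 = 2 \<or> (k mod 4 = 3 \<and> even i))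
          \<longrightarrow> f' i (i + k - 1) = - f i (i + k - 1))"
      proof (elim disjE exE conjE)
        fix m assume km: "k = int m" and e: "f' i (i + k - 1) = sg m i * f i (i + k - 1)"
        have "k mod 4 = int (m mod 4)" using km by (simp add: zmod_int)
        then show ?thesis
          using e sg_mod4[of m i] by auto
      qed auto
      show ?thesis by (rule C)
    qed
  qed
qed

end
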